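(* Let $n \ge m \ge 2$ be integers and let $K_{n,m}$ be the complete bipartite graph with parts of sizes $n$ and $m$. (i) If $n$ is even, then $\mathrm{sg_e}(K_{n,m}) = n+1$ if $n=m$, and $\mathrm{sg_e}(K_{n,m}) = n$ if $n \ge m+1$. (ii) If $n$ is odd, then $\mathrm{sg_e}(K_{n,m}) = n+2$ if $n=m$, $\mathrm{sg_e}(K_{n,m}) = n+1$ if $n=m+1$, and $\mathrm{sg_e}(K_{n,m}) = n$ if $n \ge m+2$.
   Context: All graphs are finite, simple and connected. A set $S \subseteq V(G)$ is a strong edge geodetic set of $G$ if one can assign to every unordered pair $\{u,v\}$ of distinct vertices of $S$ either one shortest $u,v$-path $P_{uv}$ in $G$ or no path, in such a way that every edge of $G$ lies on at least one of the assigned paths. The strong edge geodetic number $\mathrm{sg_e}(G)$ is the minimum cardinality of a strong edge geodetic set of $G$. *)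

theory Defs
  imports Main
begin

definition simple_graph :: "'a set \<Rightarrow> 'a set set \<Rightarrow> bool" where
  "simple_graph V E \<longleftrightarrow> finite V \<and> (\<forall>e\<in>E. \<exists>u v. u \<in> V \<and> v \<in> V \<and> u \<noteq> v \<and> e = {u, v})"

definition is_path :: "'a set \<Rightarrow> 'a set set \<Rightarrow> 'a list \<Rightarrow> 'a \<Rightarrow> 'a \<Rightarrow> bool" where
  "is_path V E p u v \<longleftrightarrow> p \<noteq> [] \<and> hd p = u \<and> last p = v \<and> distinct p \<and> set p \<subseteq> V \<and>
     (\<forall>i. Suc i < length p \<longrightarrow> {p ! i, p ! Suc i} \<in> E)"

definition path_edges :: "'a list \<Rightarrow> 'a set set" where
  "path_edges p = {{p ! i, p ! Suc i} | i. Suc i < length p}"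

definition connected_graph :: "'a set \<Rightarrow> 'a set set \<Rightarrow> bool" where
  "connected_graph V E \<longleftrightarrow> V \<noteq> {} \<and> (\<forall>u\<in>V. \<forall>v\<in>V. \<exists>p. is_path V E p u v)"

definition gdist :: "'a set \<Rightarrow> 'a set set \<Rightarrow> 'a \<Rightarrow> 'a \<Rightarrow> nat" where
  "gdist V E u v = (LEAST k. \<exists>p. is_path V E p u v \<and> length p = Suc k)"

definition shortest_path :: "'a set \<Rightarrow> 'a set set \<Rightarrow> 'a list \<Rightarrow> 'a \<Rightarrow> 'a \<Rightarrow> bool" where
  "shortest_path V E p u v \<longleftrightarrow> is_path V E p u v \<and> length p = Suc (gdist V E u v)"

text \<open>S is a strong edge geodetic set: to every unordered pair {u,v} of distinct
  vertices of S we assign either one shortest u,v-path or none, so that every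
  edge lies on an assigned path.\<close>
definition strong_edge_geodetic :: "'a set \<Rightarrow> 'a set set \<Rightarrow> 'a set \<Rightarrow> bool" where
  "strong_edge_geodetic V E S \<longleftrightarrow> S \<subseteq> V \<and>
     (\<exists>f :: 'a set \<Rightarrow> 'a list option.
        (\<forall>u\<in>S. \<forall>v\<in>S. \<forall>p. u \<noteq> v \<and> f {u, v} = Some p \<longrightarrow>
              shortest_path V E p u v \<or> shortest_path V E p v u) \<and>
        (\<forall>e\<in>E. \<exists>u\<in>S. \<exists>v\<in>S. \<exists>p. u \<noteq> v \<and> f {u, v} = Some p \<and> e \<in> path_edges p))"

definition sge_number :: "'a set \<Rightarrow> 'a set set \<Rightarrow> nat" where
  "sge_number V E = Min (card ` {S. strong_edge_geodetic V E S})"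

definition Kbip_V :: "nat \<Rightarrow> nat \<Rightarrow> (nat + nat) set" where
  "Kbip_V n m = Inl ` {..<n} \<union> Inr ` {..<m}"

definition Kbip_E :: "nat \<Rightarrow> nat \<Rightarrow> (nat + nat) set set" where
  "Kbip_E n m = {{Inl i, Inr j} | i j. i < n \<and> j < m}"

end

theory Submission
  imports Defs
begin


lemma two_choose2: "2 * (n choose 2) = n * (n - 1)"
proof -
  have "even (n * (n - 1))" by (cases "even n") auto
  then show ?thesis unfolding choose_two by simp
qed

lemma count_pairs:
  fixes A :: "'a set" and T :: "'b set" and mid :: "'a set \<Rightarrow> 'b"
  assumes fin: "finite A" and finT: "finite T"
    and cov: "\<And>y x. y \<in> T \<Longrightarrow> x \<in> A \<Longrightarrow> \<exists>P. P \<subseteq> A \<and> card P = 2 \<and> x \<in> P \<and> mid P = y"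
  shows "card T * card A \<le> card A * (card A - 1)"
    and "odd (card A) \<Longrightarrow> card T * (card A + 1) \<le> card A * (card A - 1)"
proof -
  define M where "M y = {P. P \<subseteq> A \<and> card P = 2 \<and> mid P = y}" for y
  define Pairs where "Pairs = {P. P \<subseteq> A \<and> card P = 2}"
  have finP: "finite Pairs" unfolding Pairs_def using fin by auto
  have cardP: "card Pairs = card A choose 2" unfolding Pairs_def using n_subsets[OF fin] by simp
  have finM: "finite (M y)" for y
    by (rule finite_subset[OF _ finP]) (auto simp: M_def Pairs_def)
  have sumeq: "(\<Sum>y\<in>T. card (M y)) = card (\<Union>(M ` T))"
    by (rule card_UN_disjoint[symmetric]) (use finT finM in simp_all, auto simp: M_def)
  also have "\<dots> \<le> card Pairs"
    by (rule card_mono[OF finP]) (auto simp: M_def Pairs_def)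
  finally have s1: "2 * (\<Sum>y\<in>T. card (M y)) \<le> card A * (card A - 1)"
    using cardP two_choose2[of "card A"] by simp
  have lowM: "card A \<le> 2 * card (M y)" if "y \<in> T" for y
  proof -
    have "A \<subseteq> \<Union>(M y)" using cov[OF that] by (auto simp: M_def)
    then have "card A \<le> card (\<Union>(M y))"
      by (rule card_mono[rotated]) (use finM fin in \<open>auto simp: M_def intro: finite_subset\<close>)
    also have "\<dots> \<le> sum card (M y)" by (rule card_Union_le_sum_card)
    also have "\<dots> = 2 * card (M y)" by (simp add: M_def)
    finally show ?thesis .
  qed
  have eq2: "(\<Sum>y\<in>T. 2 * card (M y)) = 2 * (\<Sum>y\<in>T. card (M y))"
    by (simp add: sum_distrib_left)
  have "card T * card A \<le> (\<Sum>y\<in>T. 2 * card (M y))"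
    using sum_bounded_below[of T "card A" "\<lambda>y. 2 * card (M y)"] lowM by (simp add: mult.commute)
  then show "card T * card A \<le> card A * (card A - 1)"
    using s1 eq2 by linarith
  assume odd: "odd (card A)"
  have lowM2: "card A + 1 \<le> 2 * card (M y)" if "y \<in> T" for y
    using lowM[OF that] odd by presburger
  have "card T * (card A + 1) \<le> (\<Sum>y\<in>T. 2 * card (M y))"
    using sum_bounded_below[of T "card A + 1" "\<lambda>y. 2 * card (M y)"] lowM2 by (simp add: mult.commute)
  then show "card T * (card A + 1) \<le> card A * (card A - 1)"
    using s1 eq2 by linarith
qed



lemma path_edges_2: "path_edges [a,b] = {{a,b}}"
  by (auto simp: path_edges_def)

lemma path_edges_3: "path_edges [a,b,c] = {{a,b},{b,c}}"
proof (rule set_eqI, rule iffI)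
  fix e assume "e \<in> path_edges [a,b,c]"
  then obtain i where "Suc i < length [a,b,c]" "e = {[a,b,c]!i, [a,b,c]!Suc i}" unfolding path_edges_def by blast
  then have "i = 0 \<or> i = 1" by auto
  then show "e \<in> {{a,b},{b,c}}" using \<open>e = _\<close> by auto
next
  fix e assume "e \<in> {{a,b},{b,c}}"
  then have "e = {[a,b,c]!0, [a,b,c]!Suc 0} \<or> e = {[a,b,c]!1, [a,b,c]!Suc 1}" by auto
  moreover have "Suc 0 < length [a,b,c]" "Suc 1 < length [a,b,c]" by simp_all
  ultimately show "e \<in> path_edges [a,b,c]" unfolding path_edges_def by blast
qed

lemma is_path_len1: "is_path V E p u v \<Longrightarrow> length p = 1 \<Longrightarrow> u = v"
  by (cases p) (auto simp: is_path_def)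

lemma list2: "length p = 2 \<Longrightarrow> \<exists>a b. p = [a,b]"
  by (cases p; cases "tl p") auto

lemma list3: "length p = 3 \<Longrightarrow> \<exists>a b c. p = [a,b,c]"
  by (cases p; cases "tl p"; cases "tl (tl p)") auto

lemma is_path_len2: "is_path V E p u v \<Longrightarrow> length p = 2 \<Longrightarrow> p = [u,v] \<and> {u,v} \<in> E"
  using list2[of p] by (auto simp: is_path_def)

lemma is_path_len3: "is_path V E p u v \<Longrightarrow> length p = 3 \<Longrightarrow>
   \<exists>w. p = [u,w,v] \<and> {u,w} \<in> E \<and> {w,v} \<in> E \<and> u \<noteq> w \<and> w \<noteq> v \<and> u \<noteq> v"
proof -
  assume a: "is_path V E p u v" "length p = 3"
  then obtain x y z where p: "p = [x,y,z]" using list3 by blast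
  have h: "\<forall>i. Suc i < length p \<longrightarrow> {p!i,p!Suc i}\<in>E" using a by (simp add: is_path_def)
  have "{x,y} \<in> E" "{y,z} \<in> E" using h[rule_format, of 0] h[rule_format, of 1] p by auto
  then show ?thesis using a p by (auto simp: is_path_def)
qed

lemma is_path_2I: "a \<in> V \<Longrightarrow> b \<in> V \<Longrightarrow> a \<noteq> b \<Longrightarrow> {a,b} \<in> E \<Longrightarrow> is_path V E [a,b] a b"
  unfolding is_path_def by (auto simp: less_Suc_eq)

lemma is_path_3I: "a \<in> V \<Longrightarrow> b \<in> V \<Longrightarrow> c \<in> V \<Longrightarrow> distinct [a,b,c] \<Longrightarrow> {a,b} \<in> E \<Longrightarrow> {b,c} \<in> E
   \<Longrightarrow> is_path V E [a,b,c] a c"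
  unfolding is_path_def by (auto simp: less_Suc_eq)

lemma KE_iff: "{Inl i, Inr j} \<in> Kbip_E n m \<longleftrightarrow> i < n \<and> j < m"
  by (auto simp: Kbip_E_def doubleton_eq_iff)

lemma KE_Inr: "{Inr j, c} \<in> Kbip_E n m \<Longrightarrow> \<exists>i<n. c = Inl i \<and> j < m"
  by (auto simp: Kbip_E_def doubleton_eq_iff)

lemma KE_Inl: "{Inl j, c} \<in> Kbip_E n m \<Longrightarrow> \<exists>i<m. c = Inr i \<and> j < n"
  by (auto simp: Kbip_E_def doubleton_eq_iff)

lemma KE_ll: "{Inl i, Inl j} \<notin> Kbip_E n m"
  by (auto simp: Kbip_E_def doubleton_eq_iff)

lemma KE_rr: "{Inr i, Inr j} \<notin> Kbip_E n m"
  by (auto simp: Kbip_E_def doubleton_eq_iff)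

lemma KV: "Inl i \<in> Kbip_V n m \<longleftrightarrow> i < n" "Inr j \<in> Kbip_V n m \<longleftrightarrow> j < m"
  by (auto simp: Kbip_V_def)

lemma gdist_le: "is_path V E p u v \<Longrightarrow> length p = Suc k \<Longrightarrow> gdist V E u v \<le> k"
  unfolding gdist_def by (rule Least_le) blast

lemma gdist_le2:
  assumes "n \<ge> 1" "m \<ge> 1" "u \<in> Kbip_V n m" "v \<in> Kbip_V n m"
  shows "gdist (Kbip_V n m) (Kbip_E n m) u v \<le> 2"
proof (cases "u = v")
  case True
  have "is_path (Kbip_V n m) (Kbip_E n m) [u] u v" using True assms by (auto simp: is_path_def)
  then show ?thesis using gdist_le[of _ _ "[u]" u v 0] by simp
next
  case False
  show ?thesis
  proof (cases u; cases v)
    fix i j assume u: "u = Inl i" and v: "v = Inl j"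
    have "is_path (Kbip_V n m) (Kbip_E n m) [Inl i, Inr 0, Inl j] u v"
      using False assms unfolding u v by (intro is_path_3I) (auto simp: KV KE_iff insert_commute)
    then have "gdist (Kbip_V n m) (Kbip_E n m) u v \<le> 2" by (rule gdist_le) simp
    then show ?thesis by simp
  next
    fix i j assume u: "u = Inl i" and v: "v = Inr j"
    have "is_path (Kbip_V n m) (Kbip_E n m) [Inl i, Inr j] u v"
      using False assms unfolding u v by (intro is_path_2I) (auto simp: KV KE_iff insert_commute)
    then have "gdist (Kbip_V n m) (Kbip_E n m) u v \<le> 1" by (rule gdist_le) simp
    then show ?thesis by simp
  next
    fix i j assume u: "u = Inr i" and v: "v = Inl j"
    have "is_path (Kbip_V n m) (Kbip_E n m) [Inr i, Inl j] u v"
      using False assms unfolding u v by (intro is_path_2I) (auto simp: KV KE_iff insert_commute)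
    then have "gdist (Kbip_V n m) (Kbip_E n m) u v \<le> 1" by (rule gdist_le) simp
    then show ?thesis by simp
  next
    fix i j assume u: "u = Inr i" and v: "v = Inr j"
    have "is_path (Kbip_V n m) (Kbip_E n m) [Inr i, Inl 0, Inr j] u v"
      using False assms unfolding u v by (intro is_path_3I) (auto simp: KV KE_iff insert_commute)
    then have "gdist (Kbip_V n m) (Kbip_E n m) u v \<le> 2" by (rule gdist_le) simp
    then show ?thesis by simp
  qed
qed



lemma edge_side:
  assumes P: "is_path V E p u v" and L: "length p \<le> 3" and e: "{a,b} \<in> path_edges p"
    and b: "b \<notin> S" and u: "u \<in> S" and v: "v \<in> S"
  shows "\<exists>c. {a,c} = {u,v} \<and> (p = [a,b,c] \<or> p = [c,b,a]) \<and> {b,c} \<in> E \<and> a \<noteq> c"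
proof -
  have "length p \<ge> 2" using e unfolding path_edges_def by auto
  then have "length p = 2 \<or> length p = 3" using L by auto
  then show ?thesis
  proof
    assume "length p = 2"
    with is_path_len2[OF P] have "p = [u,v]" by auto
    then have "{a,b} = {u,v}" using e by (simp add: path_edges_2)
    then show ?thesis using b u v by (auto simp: doubleton_eq_iff)
  next
    assume "length p = 3"
    then obtain w where w: "p = [u,w,v]" "{u,w} \<in> E" "{w,v} \<in> E" "u \<noteq> w" "w \<noteq> v" "u \<noteq> v"
      using is_path_len3[OF P] by blast
    then have "{a,b} = {u,w} \<or> {a,b} = {w,v}" using e by (simp add: path_edges_3)
    then show ?thesis
    proof
      assume "{a,b} = {u,w}"
      then have "a = u" "b = w" using b u by (auto simp: doubleton_eq_iff)
      then show ?thesis using w by (intro exI[of _ v]) auto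
    next
      assume "{a,b} = {w,v}"
      then have "a = v" "b = w" using b v by (auto simp: doubleton_eq_iff)
      then show ?thesis using w by (intro exI[of _ u]) (auto simp: insert_commute)
    qed
  qed
qed

lemma cover_step:
  assumes f1: "\<forall>u\<in>S. \<forall>v\<in>S. \<forall>p. u \<noteq> v \<and> f {u, v} = Some p \<longrightarrow>
              shortest_path (Kbip_V n m) (Kbip_E n m) p u v \<or> shortest_path (Kbip_V n m) (Kbip_E n m) p v u"
    and f2: "\<forall>e\<in>Kbip_E n m. \<exists>u\<in>S. \<exists>v\<in>S. \<exists>p. u \<noteq> v \<and> f {u, v} = Some p \<and> e \<in> path_edges p"
    and SV: "S \<subseteq> Kbip_V n m" and nm: "n \<ge> 1" "m \<ge> 1"
    and ab: "{a,b} \<in> Kbip_E n m" and b: "b \<notin> S"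
  shows "\<exists>c p. f {a,c} = Some p \<and> p!1 = b \<and> {b,c} \<in> Kbip_E n m \<and> a \<noteq> c \<and> a \<in> S"
proof -
  obtain u v p where uv: "u \<in> S" "v \<in> S" "u \<noteq> v" "f {u,v} = Some p" "{a,b} \<in> path_edges p"
    using f2 ab by blast
  have sp: "shortest_path (Kbip_V n m) (Kbip_E n m) p u v \<or> shortest_path (Kbip_V n m) (Kbip_E n m) p v u"
    using f1 uv by blast
  have g1: "gdist (Kbip_V n m) (Kbip_E n m) u v \<le> 2" "gdist (Kbip_V n m) (Kbip_E n m) v u \<le> 2"
    using gdist_le2[OF nm] uv SV by auto
  from sp show ?thesis
  proof
    assume s: "shortest_path (Kbip_V n m) (Kbip_E n m) p u v"
    then have "is_path (Kbip_V n m) (Kbip_E n m) p u v" "length p \<le> 3"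
      using g1 by (auto simp: shortest_path_def)
    from edge_side[OF this uv(5) b uv(1,2)] obtain c where
      c: "{a,c} = {u,v}" "p = [a,b,c] \<or> p = [c,b,a]" "{b,c} \<in> Kbip_E n m" "a \<noteq> c" by blast
    then show ?thesis using uv by (intro exI[of _ c] exI[of _ p]) auto
  next
    assume s: "shortest_path (Kbip_V n m) (Kbip_E n m) p v u"
    then have "is_path (Kbip_V n m) (Kbip_E n m) p v u" "length p \<le> 3"
      using g1 by (auto simp: shortest_path_def)
    from edge_side[OF this uv(5) b uv(2,1)] obtain c where
      c: "{a,c} = {v,u}" "p = [a,b,c] \<or> p = [c,b,a]" "{b,c} \<in> Kbip_E n m" "a \<noteq> c" by blast
    then show ?thesis using uv by (intro exI[of _ c] exI[of _ p]) (auto simp: insert_commute)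
  qed
qed



lemma lowA:
  assumes seg: "strong_edge_geodetic (Kbip_V n m) (Kbip_E n m) S" and nm: "n \<ge> 1" "m \<ge> 1"
    and X: "\<forall>x<n. Inl x \<in> S"
  shows "card {y. y < m \<and> Inr y \<notin> S} * n \<le> n * (n - 1)"
    and "odd n \<Longrightarrow> card {y. y < m \<and> Inr y \<notin> S} * (n + 1) \<le> n * (n - 1)"
proof -
  obtain f where SV: "S \<subseteq> Kbip_V n m" and
    f1: "\<forall>u\<in>S. \<forall>v\<in>S. \<forall>p. u \<noteq> v \<and> f {u, v} = Some p \<longrightarrow>
              shortest_path (Kbip_V n m) (Kbip_E n m) p u v \<or> shortest_path (Kbip_V n m) (Kbip_E n m) p v u"
    and f2: "\<forall>e\<in>Kbip_E n m. \<exists>u\<in>S. \<exists>v\<in>S. \<exists>p. u \<noteq> v \<and> f {u, v} = Some p \<and> e \<in> path_edges p"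
    using seg unfolding strong_edge_geodetic_def by blast
  define T where "T = {y. y < m \<and> Inr y \<notin> S}"
  define mid where "mid P = (case f (Inl ` P) of Some p \<Rightarrow> p ! 1 | None \<Rightarrow> Inl 0)" for P
  have fin: "finite {..<n}" "finite (Inr ` T)" by (auto simp: T_def)
  have cov: "\<exists>P. P \<subseteq> {..<n} \<and> card P = 2 \<and> x \<in> P \<and> mid P = y'"
    if yT: "y' \<in> Inr ` T" and xA: "x \<in> {..<n}" for y' x
  proof -
    obtain y where y: "y' = Inr y" "y < m" "Inr y \<notin> S" using yT by (auto simp: T_def)
    have ab: "{Inl x, Inr y} \<in> Kbip_E n m" using y xA by (simp add: KE_iff)
    obtain c p where cp: "f {Inl x, c} = Some p" "p!1 = Inr y" "{Inr y, c} \<in> Kbip_E n m" "Inl x \<noteq> c"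
      using cover_step[OF f1 f2 SV nm ab y(3)] by blast
    obtain x' where x': "x' < n" "c = Inl x'" using KE_Inr[OF cp(3)] by blast
    have "Inl ` {x, x'} = {Inl x, c}" using x' by auto
    then have "mid {x,x'} = y'" using cp y by (simp add: mid_def)
    moreover have "card {x,x'} = 2" using cp(4) x' by auto
    ultimately show ?thesis using x' xA by (intro exI[of _ "{x,x'}"]) auto
  qed
  have cT: "card (Inr ` T) = card T" by (rule card_image) simp
  show "card {y. y < m \<and> Inr y \<notin> S} * n \<le> n * (n - 1)"
    using count_pairs(1)[of "{..<n}" "Inr ` T" mid, OF fin cov] unfolding cT T_def[symmetric] by simp
  assume "odd n"
  then show "card {y. y < m \<and> Inr y \<notin> S} * (n + 1) \<le> n * (n - 1)"
    using count_pairs(2)[of "{..<n}" "Inr ` T" mid, OF fin cov] unfolding cT T_def[symmetric] by simp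
qed

lemma lowB:
  assumes seg: "strong_edge_geodetic (Kbip_V n m) (Kbip_E n m) S" and nm: "n \<ge> 1" "m \<ge> 1"
    and Y: "\<forall>y<m. Inr y \<in> S"
  shows "card {x. x < n \<and> Inl x \<notin> S} * m \<le> m * (m - 1)"
    and "odd m \<Longrightarrow> card {x. x < n \<and> Inl x \<notin> S} * (m + 1) \<le> m * (m - 1)"
proof -
  obtain f where SV: "S \<subseteq> Kbip_V n m" and
    f1: "\<forall>u\<in>S. \<forall>v\<in>S. \<forall>p. u \<noteq> v \<and> f {u, v} = Some p \<longrightarrow>
              shortest_path (Kbip_V n m) (Kbip_E n m) p u v \<or> shortest_path (Kbip_V n m) (Kbip_E n m) p v u"
    and f2: "\<forall>e\<in>Kbip_E n m. \<exists>u\<in>S. \<exists>v\<in>S. \<exists>p. u \<noteq> v \<and> f {u, v} = Some p \<and> e \<in> path_edges p"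
    using seg unfolding strong_edge_geodetic_def by blast
  define T where "T = {x. x < n \<and> Inl x \<notin> S}"
  define mid where "mid P = (case f (Inr ` P) of Some p \<Rightarrow> p ! 1 | None \<Rightarrow> Inl 0)" for P
  have fin: "finite {..<m}" "finite (Inl ` T)" by (auto simp: T_def)
  have cov: "\<exists>P. P \<subseteq> {..<m} \<and> card P = 2 \<and> x \<in> P \<and> mid P = y'"
    if yT: "y' \<in> Inl ` T" and xA: "x \<in> {..<m}" for y' x
  proof -
    obtain y where y: "y' = Inl y" "y < n" "Inl y \<notin> S" using yT by (auto simp: T_def)
    have ab: "{Inr x, Inl y} \<in> Kbip_E n m" using y xA by (simp add: KE_iff insert_commute)
    obtain c p where cp: "f {Inr x, c} = Some p" "p!1 = Inl y" "{Inl y, c} \<in> Kbip_E n m" "Inr x \<noteq> c"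
      using cover_step[OF f1 f2 SV nm ab y(3)] by blast
    obtain x' where x': "x' < m" "c = Inr x'" using KE_Inl[OF cp(3)] by blast
    have "Inr ` {x, x'} = {Inr x, c}" using x' by auto
    then have "mid {x,x'} = y'" using cp y by (simp add: mid_def)
    moreover have "card {x,x'} = 2" using cp(4) x' by auto
    ultimately show ?thesis using x' xA by (intro exI[of _ "{x,x'}"]) auto
  qed
  have cT: "card (Inl ` T) = card T" by (rule card_image) simp
  show "card {x. x < n \<and> Inl x \<notin> S} * m \<le> m * (m - 1)"
    using count_pairs(1)[of "{..<m}" "Inl ` T" mid, OF fin cov] unfolding cT T_def[symmetric] by simp
  assume "odd m"
  then show "card {x. x < n \<and> Inl x \<notin> S} * (m + 1) \<le> m * (m - 1)"
    using count_pairs(2)[of "{..<m}" "Inl ` T" mid, OF fin cov] unfolding cT T_def[symmetric] by simp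
qed



definition qq :: "nat \<Rightarrow> nat" where "qq n = 2 * (n div 2) - 1"

lemma tbound:
  fixes t n :: nat
  assumes "n \<ge> 1" "t * n \<le> n * (n - 1)" "odd n \<Longrightarrow> t * (n + 1) \<le> n * (n - 1)"
  shows "t \<le> qq n"
proof -
  have t1: "t \<le> n - 1" using assms(1,2) by (simp add: mult.commute)
  show ?thesis
  proof (cases "even n")
    case True
    then show ?thesis using t1 by (simp add: qq_def)
  next
    case False
    then have q: "qq n = n - 2" unfolding qq_def by presburger
    show ?thesis
    proof (rule ccontr)
      assume "\<not> t \<le> qq n"
      then have t2: "t \<ge> n - 1" "t \<ge> 1" using q by auto
      show False
      proof (cases "n = 1")
        case True
        then show False using assms(3) False t2 by simp
      next
        case n1: False
        then have np: "n - 1 > 0" using assms(1) by simp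
        have "(n - 1) * (n + 1) \<le> t * (n + 1)" using t2 by (intro mult_right_mono) simp_all
        also have "\<dots> \<le> n * (n - 1)" using assms(3) False by simp
        finally have "(n - 1) * (n + 1) \<le> (n - 1) * n" by (simp add: mult.commute)
        then have "n + 1 \<le> n" using np by simp
        then show False by simp
      qed
    qed
  qed
qed

lemma card_split:
  assumes "S \<subseteq> Kbip_V n m"
  shows "card S = card {x. x < n \<and> Inl x \<in> S} + card {y. y < m \<and> Inr y \<in> S}"
proof -
  have "S = Inl ` {x. x < n \<and> Inl x \<in> S} \<union> Inr ` {y. y < m \<and> Inr y \<in> S}"
    using assms by (auto simp: Kbip_V_def)
  then have "card S = card (Inl ` {x. x < n \<and> Inl x \<in> S} \<union> Inr ` {y. y < m \<and> Inr y \<in> S})" by simp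
  also have "\<dots> = card (Inl ` {x. x < n \<and> Inl x \<in> S} :: (nat+nat) set) + card (Inr ` {y. y < m \<and> Inr y \<in> S} :: (nat+nat) set)"
    by (rule card_Un_disjoint) auto
  also have "\<dots> = card {x. x < n \<and> Inl x \<in> S} + card {y. y < m \<and> Inr y \<in> S}"
    by (simp add: card_image)
  finally show ?thesis .
qed

lemma card_compl:
  "card {y. y < m \<and> P y} + card {y. y < m \<and> \<not> P y} = m"
proof -
  have "card {y. y < m \<and> P y} + card {y. y < m \<and> \<not> P y} = card ({y. y < m \<and> P y} \<union> {y. y < m \<and> \<not> P y})"
    by (rule card_Un_disjoint[symmetric]) auto
  also have "{y. y < m \<and> P y} \<union> {y. y < m \<and> \<not> P y} = {..<m}" by auto
  finally show ?thesis by simp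
qed

lemma lower:
  assumes seg: "strong_edge_geodetic (Kbip_V n m) (Kbip_E n m) S" and nm: "2 \<le> m" "m \<le> n"
  shows "n + (m - qq n) \<le> card S"
proof -
  have nm1: "n \<ge> 1" "m \<ge> 1" using nm by auto
  obtain f where SV: "S \<subseteq> Kbip_V n m" and
    f1: "\<forall>u\<in>S. \<forall>v\<in>S. \<forall>p. u \<noteq> v \<and> f {u, v} = Some p \<longrightarrow>
              shortest_path (Kbip_V n m) (Kbip_E n m) p u v \<or> shortest_path (Kbip_V n m) (Kbip_E n m) p v u"
    and f2: "\<forall>e\<in>Kbip_E n m. \<exists>u\<in>S. \<exists>v\<in>S. \<exists>p. u \<noteq> v \<and> f {u, v} = Some p \<and> e \<in> path_edges p"
    using seg unfolding strong_edge_geodetic_def by blast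
  have cs: "card S = card {x. x < n \<and> Inl x \<in> S} + card {y. y < m \<and> Inr y \<in> S}"
    by (rule card_split[OF SV])
  have cl: "card {x. x < n \<and> Inl x \<in> S} + card {x. x < n \<and> Inl x \<notin> S} = n" by (rule card_compl)
  have cr: "card {y. y < m \<and> Inr y \<in> S} + card {y. y < m \<and> Inr y \<notin> S} = m" by (rule card_compl)
  have qmono: "qq m \<le> qq n" unfolding qq_def using nm by (simp add: diff_le_mono div_le_mono)
  have qm: "qq m \<le> m" unfolding qq_def by simp
  have "(\<forall>x<n. Inl x \<in> S) \<or> (\<forall>y<m. Inr y \<in> S)"
  proof (rule ccontr)
    assume "\<not> ?thesis"
    then obtain x y where xy: "x < n" "Inl x \<notin> S" "y < m" "Inr y \<notin> S" by auto
    have ab: "{Inl x, Inr y} \<in> Kbip_E n m" using xy by (simp add: KE_iff)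
    show False using cover_step[OF f1 f2 SV nm1 ab xy(4)] xy(2) by blast
  qed
  then show ?thesis
  proof
    assume X: "\<forall>x<n. Inl x \<in> S"
    have "card {y. y < m \<and> Inr y \<notin> S} \<le> qq n"
      using lowA[OF seg nm1 X] nm1 by (intro tbound) auto
    moreover have "card {x. x < n \<and> Inl x \<notin> S} = 0" using X by simp
    ultimately show ?thesis using cs cl cr by linarith
  next
    assume Y: "\<forall>y<m. Inr y \<in> S"
    have "card {x. x < n \<and> Inl x \<notin> S} \<le> qq m"
      using lowB[OF seg nm1 Y] nm1 by (intro tbound) auto
    moreover have "card {y. y < m \<and> Inr y \<notin> S} = 0" using Y by simp
    ultimately show ?thesis using cs cl cr qmono qm by linarith
  qed
qed



definition cl :: "nat \<Rightarrow> nat \<Rightarrow> nat \<Rightarrow> nat option" where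
  "cl n a b = (if b < qq n then Some ((a + b) mod qq n) else if b = qq n then Some ((2 * a) mod qq n)
      else if a < qq n then Some a else None)"

lemma qq_even: "even n \<Longrightarrow> qq n = n - 1" unfolding qq_def by simp
lemma qq_odd: "odd n \<Longrightarrow> qq n = n - 2" unfolding qq_def by presburger

lemma cover_cl:
  assumes n: "n \<ge> 2" and x: "x < n" and c: "c < qq n"
  shows "\<exists>x'<n. x' \<noteq> x \<and> cl n (min x x') (max x x') = Some c"
proof -
  define q where "q = qq n"
  have q1: "q \<ge> 1" "q < n" using n unfolding q_def by (cases "even n"; simp add: qq_even qq_odd; presburger)+
  have qodd: "odd q" using n unfolding q_def by (cases "even n"; simp add: qq_even qq_odd; presburger)
  have xcases: "x < q \<or> x = q \<or> x = q + 1" using x n unfolding q_def by (cases "even n"; simp add: qq_even qq_odd; presburger)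
  have cq: "c < q" using c q_def by simp
  from xcases show ?thesis
  proof (elim disjE)
    assume xq: "x < q"
    define y where "y = (c + q - x) mod q"
    have yq: "y < q" using q1 unfolding y_def by simp
    have sum: "(x + y) mod q = c"
    proof -
      have "(x + y) mod q = (x + (c + q - x)) mod q" unfolding y_def by (simp add: mod_add_right_eq)
      also have "x + (c + q - x) = c + q" using xq by simp
      finally show ?thesis using cq by simp
    qed
    show ?thesis
    proof (cases "y = x")
      case False
      have "cl n (min x y) (max x y) = Some ((min x y + max x y) mod q)"
        using xq yq unfolding cl_def q_def by simp
      also have "min x y + max x y = x + y" by simp
      finally show ?thesis using sum False yq q1 by (intro exI[of _ y]) auto
    next
      case True
      have "cl n (min x q) (max x q) = Some ((2 * x) mod q)"
        using xq unfolding cl_def q_def by simp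
      also have "2 * x = x + y" using True by simp
      finally show ?thesis using sum xq q1 by (intro exI[of _ q]) auto
    qed
  next
    assume xq: "x = q"
    define i where "i = (c * ((q + 1) div 2)) mod q"
    have iq: "i < q" using q1 unfolding i_def by simp
    have "(2 * i) mod q = (2 * (c * ((q + 1) div 2))) mod q" unfolding i_def by (simp add: mod_mult_right_eq)
    also have "2 * (c * ((q + 1) div 2)) = c * (q + 1)"
    proof -
      have h: "2 * ((q + 1) div 2) = q + 1" using qodd by presburger
      have "2 * (c * ((q + 1) div 2)) = c * (2 * ((q + 1) div 2))" by (simp only: mult.left_commute)
      also have "\<dots> = c * (q + 1)" by (simp only: h)
      finally show ?thesis .
    qed
    also have "c * (q + 1) = c + c * q" by simp
    finally have i2: "(2 * i) mod q = c" using cq by simp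
    have "cl n (min x i) (max x i) = Some ((2 * i) mod q)"
      using xq iq unfolding cl_def q_def by simp
    then show ?thesis using i2 iq xq q1 by (intro exI[of _ i]) auto
  next
    assume xq: "x = q + 1"
    have "cl n (min x c) (max x c) = Some c"
      using xq cq unfolding cl_def q_def by simp
    then show ?thesis using xq cq q1 by (intro exI[of _ c]) auto
  qed
qed



definition fK :: "nat \<Rightarrow> nat \<Rightarrow> (nat + nat) set \<Rightarrow> (nat + nat) list option" where
  "fK n m s = (if \<exists>a b. a < b \<and> s = {Inl a, Inl b} then
     (case (THE (a,b). a < b \<and> s = {Inl a, Inl b}) of (a, b) \<Rightarrow>
       (case cl n a b of Some c \<Rightarrow> if c < m then Some [Inl a, Inr c, Inl b] else None | None \<Rightarrow> None))
   else if \<exists>a b. s = {Inl a, Inr b} then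
     (case (THE (a,b). s = {Inl a, Inr b}) of (a, b) \<Rightarrow> Some [Inl a, Inr b])
   else None)"

lemma fK_ll: "a < b \<Longrightarrow> fK n m {Inl a, Inl b} =
   (case cl n a b of Some c \<Rightarrow> if c < m then Some [Inl a, Inr c, Inl b] else None | None \<Rightarrow> None)"
proof -
  assume ab: "a < b"
  have te: "(THE (a',b'). a' < b' \<and> {Inl a, Inl b} = {Inl a', Inl b'}) = (a, b)"
    by (rule the_equality) (use ab in \<open>auto simp: doubleton_eq_iff\<close>)
  have ex: "\<exists>a' b'. a' < b' \<and> {Inl a, Inl b} = {Inl a', Inl b'}" using ab by blast
  show ?thesis unfolding fK_def by (subst if_P[OF ex]) (simp only: te prod.case)
qed

lemma fK_lr: "fK n m {Inl a, Inr b} = Some [Inl a, Inr b]"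
proof -
  have "(THE (a',b'). {Inl a, Inr b} = {Inl a', Inr b'}) = (a, b)"
    by (rule the_equality) (auto simp: doubleton_eq_iff)
  moreover have "\<not> (\<exists>a' b'. a' < b' \<and> {Inl a, Inr b} = {Inl a', Inl b'})"
    by (auto simp: doubleton_eq_iff)
  ultimately show ?thesis unfolding fK_def by auto
qed

lemma fK_rr: "fK n m {Inr a, Inr b} = None"
  unfolding fK_def by (auto simp: doubleton_eq_iff)

lemma gdist_eqI:
  assumes "is_path V E p u v" "length p = Suc k"
    and "\<And>p' k'. is_path V E p' u v \<Longrightarrow> length p' = Suc k' \<Longrightarrow> k \<le> k'"
  shows "gdist V E u v = k"
  unfolding gdist_def by (rule Least_equality) (use assms in blast)+

lemma sp_lr:
  assumes "i < n" "j < m"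
  shows "shortest_path (Kbip_V n m) (Kbip_E n m) [Inl i, Inr j] (Inl i) (Inr j)"
proof -
  have P: "is_path (Kbip_V n m) (Kbip_E n m) [Inl i, Inr j] (Inl i) (Inr j)"
    using assms by (intro is_path_2I) (auto simp: KV KE_iff)
  have "gdist (Kbip_V n m) (Kbip_E n m) (Inl i) (Inr j) = 1"
  proof (rule gdist_eqI[OF P])
    fix p' k' assume a: "is_path (Kbip_V n m) (Kbip_E n m) p' (Inl i) (Inr j)" "length p' = Suc k'"
    show "1 \<le> k'"
    proof (rule ccontr)
      assume "\<not> 1 \<le> k'" then have "length p' = 1" using a by simp
      then show False using is_path_len1[OF a(1)] by simp
    qed
  qed simp
  then show ?thesis using P by (simp add: shortest_path_def)
qed

lemma sp_ll:
  assumes "i < n" "j < n" "c < m" "i \<noteq> j"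
  shows "shortest_path (Kbip_V n m) (Kbip_E n m) [Inl i, Inr c, Inl j] (Inl i) (Inl j)"
proof -
  have P: "is_path (Kbip_V n m) (Kbip_E n m) [Inl i, Inr c, Inl j] (Inl i) (Inl j)"
    using assms by (intro is_path_3I) (auto simp: KV KE_iff insert_commute)
  have "gdist (Kbip_V n m) (Kbip_E n m) (Inl i) (Inl j) = 2"
  proof (rule gdist_eqI[OF P])
    fix p' k' assume a: "is_path (Kbip_V n m) (Kbip_E n m) p' (Inl i) (Inl j)" "length p' = Suc k'"
    show "2 \<le> k'"
    proof (rule ccontr)
      assume "\<not> 2 \<le> k'" then have "length p' = 1 \<or> length p' = 2" using a by auto
      then show False
      proof
        assume "length p' = 1" then show False using is_path_len1[OF a(1)] assms by simp
      next
        assume "length p' = 2" then show False using is_path_len2[OF a(1)] KE_ll by blast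
      qed
    qed
  qed simp
  then show ?thesis using P by (simp add: shortest_path_def)
qed



definition S0 :: "nat \<Rightarrow> nat \<Rightarrow> (nat + nat) set" where
  "S0 n m = Inl ` {..<n} \<union> Inr ` {qq n..<m}"

lemma S0_card: "card (S0 n m) = n + (m - qq n)"
proof -
  have "card (S0 n m) = card (Inl ` {..<n} :: (nat+nat) set) + card (Inr ` {qq n..<m} :: (nat+nat) set)"
    unfolding S0_def by (rule card_Un_disjoint) auto
  also have "\<dots> = n + (m - qq n)" by (simp add: card_image)
  finally show ?thesis .
qed

lemma S0_seg:
  assumes nm: "2 \<le> m" "m \<le> n"
  shows "strong_edge_geodetic (Kbip_V n m) (Kbip_E n m) (S0 n m)"
  unfolding strong_edge_geodetic_def
proof (intro conjI exI[of _ "fK n m"])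
  show "S0 n m \<subseteq> Kbip_V n m" unfolding S0_def Kbip_V_def by auto
  show "\<forall>u\<in>S0 n m. \<forall>v\<in>S0 n m. \<forall>p. u \<noteq> v \<and> fK n m {u, v} = Some p \<longrightarrow>
      shortest_path (Kbip_V n m) (Kbip_E n m) p u v \<or> shortest_path (Kbip_V n m) (Kbip_E n m) p v u"
  proof (intro ballI allI impI)
    fix u v p assume u: "u \<in> S0 n m" and v: "v \<in> S0 n m" and h: "u \<noteq> v \<and> fK n m {u, v} = Some p"
    have ll: "shortest_path (Kbip_V n m) (Kbip_E n m) p (Inl a) (Inl b)"
      if hs: "a < b" "a < n" "b < n" "fK n m {Inl a, Inl b} = Some p" for a b
    proof -
      obtain c where c: "cl n a b = Some c" "c < m" "p = [Inl a, Inr c, Inl b]"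
        using hs(4) unfolding fK_ll[OF hs(1)] by (auto split: option.splits if_splits)
      then show ?thesis using sp_ll[of a n b c m] hs by simp
    qed
    show "shortest_path (Kbip_V n m) (Kbip_E n m) p u v \<or> shortest_path (Kbip_V n m) (Kbip_E n m) p v u"
    proof (cases u; cases v)
      fix a b assume ua: "u = Inl a" and vb: "v = Inl b"
      have abn: "a < n" "b < n" "a \<noteq> b" using u v h ua vb by (auto simp: S0_def)
      show ?thesis
      proof (cases "a < b")
        case True
        then show ?thesis using ll[of a b] abn h ua vb by simp
      next
        case False
        then have "b < a" using abn by simp
        then show ?thesis using ll[of b a] abn h ua vb by (simp add: insert_commute)
      qed
    next
      fix a b assume ua: "u = Inl a" and vb: "v = Inr b"
      have abn: "a < n" "b < m" using u v ua vb by (auto simp: S0_def)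
      then show ?thesis using sp_lr[OF abn] h ua vb by (simp add: fK_lr)
    next
      fix a b assume ua: "u = Inr a" and vb: "v = Inl b"
      have abn: "b < n" "a < m" using u v ua vb by (auto simp: S0_def)
      then show ?thesis using sp_lr[OF abn] h ua vb by (simp add: fK_lr insert_commute)
    next
      fix a b assume ua: "u = Inr a" and vb: "v = Inr b"
      then show ?thesis using h by (simp add: fK_rr)
    qed
  qed
  show "\<forall>e\<in>Kbip_E n m. \<exists>u\<in>S0 n m. \<exists>v\<in>S0 n m. \<exists>p. u \<noteq> v \<and> fK n m {u, v} = Some p \<and> e \<in> path_edges p"
  proof
    fix e assume "e \<in> Kbip_E n m"
    then obtain i j where e: "e = {Inl i, Inr j}" "i < n" "j < m" by (auto simp: Kbip_E_def)
    show "\<exists>u\<in>S0 n m. \<exists>v\<in>S0 n m. \<exists>p. u \<noteq> v \<and> fK n m {u, v} = Some p \<and> e \<in> path_edges p"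
    proof (cases "j < qq n")
      case False
      then have "Inl i \<in> S0 n m" "Inr j \<in> S0 n m" using e by (auto simp: S0_def)
      then show ?thesis using e
        by (intro bexI[of _ "Inl i"] bexI[of _ "Inr j"] exI[of _ "[Inl i, Inr j]"])
           (auto simp: fK_lr path_edges_2)
    next
      case True
      obtain x' where x': "x' < n" "x' \<noteq> i" "cl n (min i x') (max i x') = Some j"
        using cover_cl[OF _ e(2) True] nm by auto
      define a where "a = min i x'"
      define b where "b = max i x'"
      have ab: "a < b" "a < n" "b < n" "i = a \<or> i = b" using x' e unfolding a_def b_def by auto
      have f: "fK n m {Inl a, Inl b} = Some [Inl a, Inr j, Inl b]"
        using fK_ll[OF ab(1), of n m] x'(3) e(3) unfolding a_def b_def by simp
      have "e \<in> path_edges [Inl a, Inr j, Inl b]"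
        using ab(4) e(1) by (auto simp: path_edges_3 insert_commute)
      moreover have "Inl a \<in> S0 n m" "Inl b \<in> S0 n m" using ab by (auto simp: S0_def)
      ultimately show ?thesis using f ab(1)
        by (intro bexI[of _ "Inl a"] bexI[of _ "Inl b"] exI[of _ "[Inl a, Inr j, Inl b]"]) auto
    qed
  qed
qed

lemma sge_value:
  assumes nm: "2 \<le> m" "m \<le> n"
  shows "sge_number (Kbip_V n m) (Kbip_E n m) = n + (m - qq n)"
proof -
  have fin: "finite {S. strong_edge_geodetic (Kbip_V n m) (Kbip_E n m) S}"
  proof (rule finite_subset)
    show "{S. strong_edge_geodetic (Kbip_V n m) (Kbip_E n m) S} \<subseteq> Pow (Kbip_V n m)"
      by (auto simp: strong_edge_geodetic_def)
    show "finite (Pow (Kbip_V n m))" by (simp add: Kbip_V_def)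
  qed
  show ?thesis unfolding sge_number_def
  proof (rule Min_eqI)
    show "finite (card ` {S. strong_edge_geodetic (Kbip_V n m) (Kbip_E n m) S})" using fin by simp
    show "\<And>y. y \<in> card ` {S. strong_edge_geodetic (Kbip_V n m) (Kbip_E n m) S} \<Longrightarrow> n + (m - qq n) \<le> y"
      using lower[OF _ nm] by auto
    show "n + (m - qq n) \<in> card ` {S. strong_edge_geodetic (Kbip_V n m) (Kbip_E n m) S}"
      using S0_seg[OF nm] S0_card[of n m] by (intro image_eqI[of _ _ "S0 n m"]) auto
  qed
qed

theorem mainTheorem1:
  fixes n m :: nat
  assumes "m \<ge> 2" and "n \<ge> m"
  shows "(even n \<longrightarrow>
            (n = m \<longrightarrow> sge_number (Kbip_V n m) (Kbip_E n m) = n + 1) \<and>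
            (n \<ge> m + 1 \<longrightarrow> sge_number (Kbip_V n m) (Kbip_E n m) = n)) \<and>
         (odd n \<longrightarrow>
            (n = m \<longrightarrow> sge_number (Kbip_V n m) (Kbip_E n m) = n + 2) \<and>
            (n = m + 1 \<longrightarrow> sge_number (Kbip_V n m) (Kbip_E n m) = n + 1) \<and>
            (n \<ge> m + 2 \<longrightarrow> sge_number (Kbip_V n m) (Kbip_E n m) = n))"
  using sge_value[OF assms] qq_even[of n] qq_odd[of n] assms by auto

end
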